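(* For all $n\ge 0$, the distribution of the quadruple $(\operatorname{asc},\operatorname{des},\operatorname{MNA},\operatorname{MND})$ on $S_n(231,312)$ equals the distribution of $(\operatorname{des},\operatorname{asc},\operatorname{MND},\operatorname{MNA})$ on $S_n(213,231)$, i.e. $$\sum_{\pi\in S_n(231,312)} t_1^{\operatorname{asc}(\pi)}t_2^{\operatorname{des}(\pi)}t_3^{\operatorname{MNA}(\pi)}t_4^{\operatorname{MND}(\pi)}=\sum_{\sigma\in S_n(213,231)} t_1^{\operatorname{des}(\sigma)}t_2^{\operatorname{asc}(\sigma)}t_3^{\operatorname{MND}(\sigma)}t_4^{\operatorname{MNA}(\sigma)}.$$
   Context: For $n\ge 0$, $S_n$ denotes the set of permutations $\pi=\pi_1\cdots\pi_n$ of $[n]=\{1,\dots,n\}$. $\pi$ avoids a pattern $\tau\in S_k$ if no subsequence $\pi_{i_1}\cdots\pi_{i_k}$ ($i_1<\dots<i_k$) satisfies $\pi_{i_a}<\pi_{i_b}\iff\tau_a<\tau_b$; $S_n(\tau,\rho)$ is the set of permutations in $S_n$ avoiding both $\tau$ and $\rho$. $\operatorname{asc}(\pi)$ (resp. $\operatorname{des}(\pi)$) is the number of $i\in[n-1]$ with $\pi_i<\pi_{i+1}$ (resp. $\pi_i>\pi_{i+1}$). $\operatorname{MNA}(\pi)$ is the maximum size of a set $I\subseteq[n-1]$ such that $\pi_i<\pi_{i+1}$ for all $i\in I$ and $|i-j|\ge 2$ for distinct $i,j\in I$; $\operatorname{MND}(\pi)$ is defined analogously with $\pi_i>\pi_{i+1}$.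 *)

theory Defs
  imports Main
begin

(* Permutations of [n] are represented as lists \<pi> = [\<pi>_1,...,\<pi>_n] (0-indexed positions). *)
definition perms :: "nat \<Rightarrow> nat list set" where
  "perms n = {xs. distinct xs \<and> set xs = {1..n}}"

definition contains :: "nat list \<Rightarrow> nat list \<Rightarrow> bool" where
  "contains \<pi> \<tau> \<longleftrightarrow> (\<exists>idx :: nat \<Rightarrow> nat.
      strict_mono_on {..<length \<tau>} idx \<and> (\<forall>a<length \<tau>. idx a < length \<pi>) \<and>
      (\<forall>a<length \<tau>. \<forall>b<length \<tau>. \<pi> ! idx a < \<pi> ! idx b \<longleftrightarrow> \<tau> ! a < \<tau> ! b))"

definition avoids :: "nat list \<Rightarrow> nat list \<Rightarrow> bool" where
  "avoids \<pi> \<tau> \<longleftrightarrow> \<not> contains \<pi> \<tau>"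

definition Av2 :: "nat \<Rightarrow> nat list \<Rightarrow> nat list \<Rightarrow> nat list set" where
  "Av2 n \<tau> \<rho> = {\<pi> \<in> perms n. avoids \<pi> \<tau> \<and> avoids \<pi> \<rho>}"

definition asc_set :: "nat list \<Rightarrow> nat set" where
  "asc_set \<pi> = {i. i + 1 < length \<pi> \<and> \<pi> ! i < \<pi> ! (i+1)}"

definition des_set :: "nat list \<Rightarrow> nat set" where
  "des_set \<pi> = {i. i + 1 < length \<pi> \<and> \<pi> ! i > \<pi> ! (i+1)}"

definition asc :: "nat list \<Rightarrow> nat" where "asc \<pi> = card (asc_set \<pi>)"
definition des :: "nat list \<Rightarrow> nat" where "des \<pi> = card (des_set \<pi>)"

definition nonadjacent :: "nat set \<Rightarrow> bool" where
  "nonadjacent I \<longleftrightarrow> (\<forall>i\<in>I. \<forall>j\<in>I. i \<noteq> j \<longrightarrow> i + 2 \<le> j \<or> j + 2 \<le> i)"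

definition MNA :: "nat list \<Rightarrow> nat" where
  "MNA \<pi> = Max (card ` {I. I \<subseteq> asc_set \<pi> \<and> nonadjacent I})"

definition MND :: "nat list \<Rightarrow> nat" where
  "MND \<pi> = Max (card ` {I. I \<subseteq> des_set \<pi> \<and> nonadjacent I})"

end

theory Submission
  imports Defs
begin


lemma contains3: "contains \<pi> [a,b,c] \<longleftrightarrow> (\<exists>i j k. i<j \<and> j<k \<and> k<length \<pi> \<and>
   (\<pi>!i<\<pi>!j \<longleftrightarrow> a<b) \<and> (\<pi>!j<\<pi>!i \<longleftrightarrow> b<a) \<and> (\<pi>!i<\<pi>!k \<longleftrightarrow> a<c) \<and>
   (\<pi>!k<\<pi>!i \<longleftrightarrow> c<a) \<and> (\<pi>!j<\<pi>!k \<longleftrightarrow> b<c) \<and> (\<pi>!k<\<pi>!j \<longleftrightarrow> c<b))"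
  (is "?L \<longleftrightarrow> ?R")
proof
  assume ?L
  then obtain idx :: "nat \<Rightarrow> nat" where sm: "strict_mono_on {..<length [a,b,c]} idx"
    and lt: "\<forall>u<length [a,b,c]. idx u < length \<pi>"
    and h: "\<forall>u<length [a,b,c]. \<forall>v<length [a,b,c]. \<pi> ! idx u < \<pi> ! idx v \<longleftrightarrow> [a,b,c] ! u < [a,b,c] ! v"
    unfolding contains_def by blast
  have 1: "idx 0 < idx 1" using sm by (auto simp: strict_mono_on_def)
  have 2: "idx 1 < idx 2" using sm by (auto simp: strict_mono_on_def)
  have 3: "idx 2 < length \<pi>" using lt by auto
  show ?R
    apply (rule exI[of _ "idx 0"], rule exI[of _ "idx 1"], rule exI[of _ "idx 2"])
    using 1 2 3 h[rule_format, of 0 1] h[rule_format, of 1 0] h[rule_format, of 0 2]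
      h[rule_format, of 2 0] h[rule_format, of 1 2] h[rule_format, of 2 1]
    by simp
next
  assume ?R
  then obtain i j k where ijk: "i<j" "j<k" "k<length \<pi>" and
   c: "(\<pi>!i<\<pi>!j \<longleftrightarrow> a<b)" "(\<pi>!j<\<pi>!i \<longleftrightarrow> b<a)" "(\<pi>!i<\<pi>!k \<longleftrightarrow> a<c)"
   "(\<pi>!k<\<pi>!i \<longleftrightarrow> c<a)" "(\<pi>!j<\<pi>!k \<longleftrightarrow> b<c)" "(\<pi>!k<\<pi>!j \<longleftrightarrow> c<b)" by blast
  define idx where "idx = (\<lambda>u::nat. if u = 0 then i else if u = 1 then j else k)"
  have t: "\<And>u::nat. u < 3 \<longleftrightarrow> u = 0 \<or> u = 1 \<or> u = 2" by auto
  have "strict_mono_on {..<3} idx"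
    unfolding strict_mono_on_def idx_def using ijk by (auto simp: t)
  moreover have "\<forall>u<length [a,b,c]. idx u < length \<pi>" using ijk by (auto simp: t idx_def)
  moreover have "\<forall>u<length [a,b,c]. \<forall>v<length [a,b,c]. \<pi> ! idx u < \<pi> ! idx v \<longleftrightarrow> [a,b,c] ! u < [a,b,c] ! v"
    using c by (auto simp: t idx_def)
  ultimately show ?L unfolding contains_def by (metis length_Cons list.size(3) numeral_3_eq_3)
qed

definition av3 :: "(nat \<Rightarrow> nat \<Rightarrow> nat \<Rightarrow> bool) \<Rightarrow> nat list \<Rightarrow> bool" where
  "av3 P \<pi> \<longleftrightarrow> (\<forall>i j k. i<j \<longrightarrow> j<k \<longrightarrow> k<length \<pi> \<longrightarrow> \<not> P (\<pi>!i) (\<pi>!j) (\<pi>!k))"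

lemma av3_ex: "av3 P \<pi> \<longleftrightarrow> \<not>(\<exists>i j k. i<j \<and> j<k \<and> k<length \<pi> \<and> P (\<pi>!i) (\<pi>!j) (\<pi>!k))"
  unfolding av3_def by blast

definition "P231 = (\<lambda>p q r::nat. r<p \<and> p<q)"
definition "P312 = (\<lambda>p q r::nat. q<r \<and> r<p)"
definition "P213 = (\<lambda>p q r::nat. q<p \<and> p<r)"

lemma av231: "avoids \<pi> [2,3,1] \<longleftrightarrow> av3 P231 \<pi>"
  unfolding avoids_def contains3 av3_ex P231_def
  apply (intro arg_cong[where f=Not] ex_cong1) by auto
lemma av312: "avoids \<pi> [3,1,2] \<longleftrightarrow> av3 P312 \<pi>"
  unfolding avoids_def contains3 av3_ex P312_def
  apply (intro arg_cong[where f=Not] ex_cong1) by auto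
lemma av213: "avoids \<pi> [2,1,3] \<longleftrightarrow> av3 P213 \<pi>"
  unfolding avoids_def contains3 av3_ex P213_def
  apply (intro arg_cong[where f=Not] ex_cong1) by auto



fun wd :: "nat list \<Rightarrow> bool list" where
  "wd (x#y#zs) = (x<y) # wd (y#zs)"
| "wd _ = []"

lemma length_wd: "length (wd xs) = length xs - 1"
  by (induction xs rule: wd.induct) auto

lemma nth_wd: "i + 1 < length xs \<Longrightarrow> wd xs ! i = (xs!i < xs!(i+1))"
  by (induction xs arbitrary: i rule: wd.induct) (auto simp: nth_Cons split: nat.splits)

lemma wd_Cons: "xs \<noteq> [] \<Longrightarrow> wd (x#xs) = (x < hd xs) # wd xs"
  by (cases xs) auto

lemma wd_map: "(\<forall>a\<in>set xs. \<forall>b\<in>set xs. f a < f b \<longleftrightarrow> a < b) \<Longrightarrow> wd (map f xs) = wd xs"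
  by (induction xs rule: wd.induct) auto

lemma av3_Cons: "av3 P (x#xs) \<longleftrightarrow> av3 P xs \<and> (\<forall>j k. j<k \<longrightarrow> k<length xs \<longrightarrow> \<not> P x (xs!j) (xs!k))"
  (is "?L \<longleftrightarrow> ?R")
proof
  assume L: ?L
  show ?R
  proof
    show "av3 P xs" unfolding av3_def
    proof (intro allI impI)
      fix i j k assume "i<j" "j<k" "k<length xs"
      then show "\<not> P (xs!i) (xs!j) (xs!k)" using L[unfolded av3_def, rule_format, of "Suc i" "Suc j" "Suc k"] by simp
    qed
    show "\<forall>j k. j<k \<longrightarrow> k<length xs \<longrightarrow> \<not> P x (xs!j) (xs!k)"
      using L[unfolded av3_def, rule_format, of 0] by (metis Suc_less_eq nth_Cons_0 nth_Cons_Suc zero_less_Suc length_Cons)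
  qed
next
  assume R: ?R
  show ?L unfolding av3_def
  proof (intro allI impI)
    fix i j k assume ijk: "i<j" "j<k" "k<length (x#xs)"
    then obtain j' k' where jk: "j = Suc j'" "k = Suc k'" by (metis Suc_pred gr0_conv_Suc less_nat_zero_code not_less_iff_gr_or_eq)
    show "\<not> P ((x#xs)!i) ((x#xs)!j) ((x#xs)!k)"
    proof (cases i)
      case 0 then show ?thesis using R ijk jk by auto
    next
      case (Suc i') then show ?thesis using R[THEN conjunct1, unfolded av3_def, rule_format, of i' j' k'] ijk jk by auto
    qed
  qed
qed

lemma av3_map:
  assumes iso: "\<forall>a\<in>set xs. \<forall>b\<in>set xs. f a < f b \<longleftrightarrow> a < b"
    and PP: "\<And>p q r. p\<in>set xs \<Longrightarrow> q\<in>set xs \<Longrightarrow> r\<in>set xs \<Longrightarrow> P (f p) (f q) (f r) = P p q r"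
  shows "av3 P (map f xs) = av3 P xs"
  unfolding av3_def using PP by (auto simp: nth_mem) 



fun mk :: "bool list \<Rightarrow> nat list" where
  "mk [] = [1]"
| "mk (True#w) = 1 # map Suc (mk w)"
| "mk (False#w) = (length w + 2) # mk w"

lemma mk_set: "set (mk w) = {1..length w + 1}"
proof (induction w rule: mk.induct)
  case (2 w)
  have "set (1 # map Suc (mk w)) = insert 1 (Suc ` {1..length w + 1})" using 2 by simp
  also have "\<dots> = {1..length w + 2}" by (auto simp: image_iff)
  finally show ?case by simp
qed auto

lemma mk_ne: "mk w \<noteq> []" by (cases w rule: mk.cases) auto

lemma mk_distinct: "distinct (mk w)"
  by (induction w rule: mk.induct) (auto simp: mk_set distinct_map)

lemma mk_wd: "wd (mk w) = w"
proof (induction w rule: mk.induct)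
  case (2 w)
  have "hd (mk w) \<in> set (mk w)" using mk_ne by simp
  then show ?case using 2 mk_ne by (simp add: wd_Cons wd_map hd_map mk_set)
next
  case (3 w)
  have "hd (mk w) \<in> set (mk w)" using mk_ne by simp
  then show ?case using 3 mk_ne by (simp add: wd_Cons mk_set)
qed auto

lemma mk_av: "av3 P213 (mk w) \<and> av3 P231 (mk w)"
proof (induction w rule: mk.induct)
  case 1 then show ?case by (auto simp: av3_def)
next
  case (2 w)
  have m1: "av3 P213 (map Suc (mk w)) = av3 P213 (mk w)" by (rule av3_map) (auto simp: P213_def)
  have m2: "av3 P231 (map Suc (mk w)) = av3 P231 (mk w)" by (rule av3_map) (auto simp: P231_def)
  have m: "av3 P213 (map Suc (mk w)) \<and> av3 P231 (map Suc (mk w))" using 2 m1 m2 by simp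
  show ?case unfolding mk.simps av3_Cons using m by (simp add: P213_def P231_def)
next
  case (3 w)
  have "\<forall>v\<in>set (mk w). v < length w + 2" using mk_set by auto
  then have hk: "\<And>k. k < length (mk w) \<Longrightarrow> \<not> length w + 2 < mk w ! k"
    using nth_mem by (meson less_asym)
  have "\<forall>j k. j < k \<longrightarrow> k < length (mk w) \<longrightarrow> \<not> length w + 2 < mk w ! k \<and> \<not> length w + 2 < mk w ! j"
    using hk by (meson less_trans)
  then show ?case unfolding mk.simps av3_Cons using 3 by (simp add: P213_def P231_def)
qed

fun lk :: "bool list \<Rightarrow> nat list" where
  "lk [] = [1]"
| "lk (True#w) = 1 # map Suc (lk w)"
| "lk (False#w) = Suc (hd (lk w)) # map (\<lambda>v. if hd (lk w) < v then Suc v else v) (lk w)"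

lemma lk_ne: "lk w \<noteq> []" by (cases w rule: lk.cases) auto

lemma lk_all: "set (lk w) = {1..length w + 1} \<and> distinct (lk w) \<and> wd (lk w) = w \<and> av3 P231 (lk w) \<and> av3 P312 (lk w)"
proof (induction w rule: lk.induct)
  case 1 then show ?case by (auto simp: av3_def)
next
  case (2 w)
  have hm: "hd (lk w) \<in> set (lk w)" using lk_ne by simp
  have s: "set (1 # map Suc (lk w)) = {1..length w + 2}" using 2
    by (auto simp: image_iff)
  have m1: "av3 P231 (map Suc (lk w)) = av3 P231 (lk w)" by (rule av3_map) (auto simp: P231_def)
  have m2: "av3 P312 (map Suc (lk w)) = av3 P312 (lk w)" by (rule av3_map) (auto simp: P312_def)
  have m: "av3 P231 (map Suc (lk w)) \<and> av3 P312 (map Suc (lk w))" using 2 m1 m2 by simp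
  have "av3 P231 (1 # map Suc (lk w)) \<and> av3 P312 (1 # map Suc (lk w))"
    unfolding av3_Cons using m by (auto simp: P231_def P312_def)
  then show ?case using 2 s hm lk_ne by (simp add: wd_Cons wd_map hd_map distinct_map)
next
  case (3 w)
  define ys where "ys = lk w"
  define y where "y = hd ys"
  define f where "f = (\<lambda>v. if y < v then Suc v else v)"
  have ne: "ys \<noteq> []" unfolding ys_def using lk_ne by simp
  have hm: "y \<in> set ys" using ne unfolding y_def by simp
  have IH: "set ys = {1..length w + 1}" "distinct ys" "wd ys = w" "av3 P231 ys" "av3 P312 ys"
    using 3 unfolding ys_def by auto
  have iso: "\<forall>a\<in>set ys. \<forall>b\<in>set ys. f a < f b \<longleftrightarrow> a < b" unfolding f_def by auto
  define zs where "zs = map f ys"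
  have zne: "zs \<noteq> []" using ne unfolding zs_def by simp
  have hz: "hd zs = y" unfolding zs_def f_def using ne by (simp add: hd_map y_def)
  have z0: "zs ! 0 = y" using hz zne by (simp add: hd_conv_nth)
  have zsy: "Suc y \<notin> set zs" unfolding zs_def f_def by auto
  have smf: "strict_mono f" unfolding f_def strict_mono_def by auto
  have zd: "distinct zs" unfolding zs_def using IH(2) strict_mono_imp_inj_on[OF smf]
    by (simp add: distinct_map)
  have zw: "wd zs = w" unfolding zs_def using wd_map[OF iso] IH(3) by simp
  have za1: "av3 P231 zs = av3 P231 ys" unfolding zs_def by (rule av3_map[OF iso]) (auto simp: P231_def f_def)
  have za2: "av3 P312 zs = av3 P312 ys" unfolding zs_def by (rule av3_map[OF iso]) (auto simp: P312_def f_def)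
  have za: "av3 P231 zs" "av3 P312 zs" using za1 za2 IH(4,5) by auto
  have ys1: "1 \<le> y" "y \<le> length w + 1" using hm IH(1) by auto
  have sz: "set (Suc y # zs) = {1..length w + 2}"
  proof -
    have "set zs = f ` {1..length w + 1}" unfolding zs_def using IH(1) by simp
    also have "\<dots> = {1..length w + 2} - {Suc y}"
    proof (rule set_eqI)
      fix v
      show "v \<in> f ` {1..length w + 1} \<longleftrightarrow> v \<in> {1..length w + 2} - {Suc y}"
      proof
        assume "v \<in> f ` {1..length w + 1}"
        then obtain x where x: "x \<in> {1..length w + 1}" "v = f x" by blast
        then show "v \<in> {1..length w + 2} - {Suc y}" unfolding f_def by (cases "y < x") auto
      next
        assume v: "v \<in> {1..length w + 2} - {Suc y}"
        show "v \<in> f ` {1..length w + 1}"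
        proof (cases "v \<le> y")
          case True
          then have "f v = v" unfolding f_def by simp
          moreover have "v \<in> {1..length w + 1}" using v True ys1 by auto
          ultimately show ?thesis by (metis imageI)
        next
          case False
          then have "f (v - 1) = v" unfolding f_def using v by auto
          moreover have "v - 1 \<in> {1..length w + 1}" using v False ys1 by auto
          ultimately show ?thesis by (metis imageI)
        qed
      qed
    qed
    finally have "set zs = {1..length w + 2} - {Suc y}" .
    moreover have "Suc y \<in> {1..length w + 2}" using ys1 by simp
    ultimately show ?thesis by (simp add: insert_absorb)
  qed
  have lt: "zs!k \<noteq> y" if "0 < k" "k < length zs" for k
    using nth_eq_iff_index_eq[OF zd, of k 0] z0 zne that by auto
  have n231: "\<forall>j k. j<k \<longrightarrow> k<length zs \<longrightarrow> \<not> P231 (Suc y) (zs!j) (zs!k)"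
  proof (intro allI impI notI)
    fix j k assume jk: "j<k" "k<length zs" and P: "P231 (Suc y) (zs!j) (zs!k)"
    have j0: "j \<noteq> 0"
    proof
      assume "j = 0" then show False using P z0 unfolding P231_def by simp
    qed
    have "zs!k < y" using P lt[of k] jk unfolding P231_def by auto
    then have "P231 (zs!0) (zs!j) (zs!k)" using P z0 unfolding P231_def by auto
    moreover have "\<not> P231 (zs!0) (zs!j) (zs!k)" using za(1)[unfolded av3_def, rule_format, of 0 j k] jk j0 by simp
    ultimately show False by simp
  qed
  have n312: "\<forall>j k. j<k \<longrightarrow> k<length zs \<longrightarrow> \<not> P312 (Suc y) (zs!j) (zs!k)"
  proof (intro allI impI notI)
    fix j k assume jk: "j<k" "k<length zs" and P: "P312 (Suc y) (zs!j) (zs!k)"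
    have j0: "j \<noteq> 0"
    proof
      assume "j = 0" then have "zs!j = y" using z0 by simp
      then show False using P unfolding P312_def by linarith
    qed
    have "zs!k < y" using P lt[of k] jk unfolding P312_def by auto
    then have "P312 (zs!0) (zs!j) (zs!k)" using P z0 unfolding P312_def by auto
    moreover have "\<not> P312 (zs!0) (zs!j) (zs!k)" using za(2)[unfolded av3_def, rule_format, of 0 j k] jk j0 by simp
    ultimately show False by simp
  qed
  have e: "lk (False#w) = Suc y # zs" unfolding zs_def f_def y_def ys_def by simp
  show ?case unfolding e using sz zd zsy zw za n231 n312 zne hz
    by (simp add: wd_Cons av3_Cons)
qed



lemma nth_ne0: assumes d: "distinct ps" and k: "k < length ps" and k0: "k \<noteq> 0" shows "ps!k \<noteq> ps!0"
proof -
  have l: "0 < length ps" using k by linarith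
  from nth_eq_iff_index_eq[OF d k l] k0 show ?thesis by blast
qed

definition Lay :: "nat list \<Rightarrow> bool" where "Lay xs \<longleftrightarrow> distinct xs \<and> av3 P231 xs \<and> av3 P312 xs"
definition MM :: "nat list \<Rightarrow> bool" where "MM xs \<longleftrightarrow> distinct xs \<and> av3 P213 xs \<and> av3 P231 xs"

lemma lay_a:
  assumes L: "Lay ps" and i: "i < length ps" and j: "j < length ps" and le: "ps!i \<le> ps!0" and gt: "ps!0 < ps!j"
  shows "i < j"
proof (rule ccontr)
  assume "\<not> i < j"
  moreover have "i \<noteq> j" using le gt by auto
  ultimately have ji: "j < i" by simp
  have j0: "j \<noteq> 0"
  proof
    assume "j = 0" then show False using gt by simp
  qed
  have d: "distinct ps" using L unfolding Lay_def by simp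
  have "ps!i \<noteq> ps!0" using nth_ne0[OF d i] ji by simp
  then have "ps!i < ps!0" using le by simp
  then have "P231 (ps!0) (ps!j) (ps!i)" using gt unfolding P231_def by simp
  moreover have "\<not> P231 (ps!0) (ps!j) (ps!i)"
    using L[unfolded Lay_def av3_def] i ji j0 by blast
  ultimately show False by simp
qed

lemma lay_b:
  assumes L: "Lay ps" and i: "0 < i" "i < j" and j: "j < length ps" and le: "ps!j \<le> ps!0"
  shows "ps!j < ps!i"
proof (rule ccontr)
  assume a: "\<not> ps!j < ps!i"
  have d: "distinct ps" using L unfolding Lay_def by simp
  have "ps!j \<noteq> ps!0" using nth_ne0[OF d j] i by simp
  then have l0: "ps!j < ps!0" using le by simp
  have "ps!i \<noteq> ps!j" using nth_eq_iff_index_eq[OF d, of i j] i j by auto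
  then have "ps!i < ps!j" using a by simp
  then have "P312 (ps!0) (ps!i) (ps!j)" using l0 unfolding P312_def by simp
  moreover have "\<not> P312 (ps!0) (ps!i) (ps!j)"
    using L[unfolded Lay_def av3_def] i j by blast
  ultimately show False by simp
qed

lemma lay_ne:
  assumes Lx: "Lay xs" and Ly: "Lay ys" and S: "set xs = set ys" and W: "wd xs = wd ys"
    and ne: "xs \<noteq> []" and ys_ne: "ys \<noteq> []" and lt: "xs!0 < ys!0"
  shows False
proof -
  define x where "x = xs!0"
  define y where "y = ys!0"
  have dx: "distinct xs" and dy: "distinct ys" using Lx Ly unfolding Lay_def by auto
  have len: "length xs = length ys" using S dx dy by (metis distinct_card)
  have "y \<in> set xs" using S ys_ne unfolding y_def by simp
  then obtain q where q: "q < length xs" "xs!q = y" by (metis in_set_conv_nth)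
  define p where "p = (LEAST p. p < length xs \<and> x < xs!p)"
  have ex: "q < length xs \<and> x < xs!q" using q lt unfolding x_def y_def by simp
  have pp: "p < length xs \<and> x < xs!p" unfolding p_def by (rule LeastI[of _ q], rule ex)
  have pmin: "\<not> x < xs!i" if "i < p" for i
  proof
    assume "x < xs!i"
    moreover have "i < length xs" using that pp by simp
    ultimately have "p \<le> i" unfolding p_def by (simp add: Least_le)
    then show False using that by simp
  qed
  have p0: "p \<noteq> 0"
  proof
    assume "p = 0" then show False using pp unfolding x_def by simp
  qed
  have wx: "wd xs ! (p-1) = True"
  proof -
    have "xs!(p-1) \<le> x" using pmin[of "p-1"] p0 by simp
    then have "xs!(p-1) < xs!(p-1+1)" using pp p0 by simp
    then show ?thesis using nth_wd[of "p-1" xs] pp p0 by simp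
  qed
  define B where "B = {s \<in> set ys. s \<le> y}"
  define Q where "Q = {i. i < length ys \<and> ys!i \<le> y}"
  have fB: "finite B" unfolding B_def by simp
  have BQ: "B = (nth ys) ` Q" unfolding B_def Q_def by (auto simp: in_set_conv_nth)
  have cQ: "card Q = card B" unfolding BQ
    by (rule card_image[symmetric], rule inj_on_nth[OF dy]) (simp add: Q_def)
  have sub: "insert y ((nth xs) ` {..<p}) \<subseteq> B"
  proof -
    have "xs!i \<in> B" if "i < p" for i
    proof -
      have "xs!i \<le> x" using pmin[OF that] by simp
      moreover have "i < length xs" using that pp by simp
      ultimately show ?thesis unfolding B_def using S lt x_def y_def nth_mem by fastforce
    qed
    moreover have "y \<in> B" unfolding B_def y_def using ys_ne by simp
    ultimately show ?thesis by auto
  qed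
  have ynot: "y \<notin> (nth xs) ` {..<p}"
  proof
    assume "y \<in> (nth xs) ` {..<p}"
    then obtain i where "i < p" "y = xs!i" by auto
    then show False using pmin lt unfolding x_def y_def by fastforce
  qed
  have ci: "card ((nth xs) ` {..<p}) = p"
    by (subst card_image) (rule inj_on_nth[OF dx], use pp in auto)
  have "card (insert y ((nth xs) ` {..<p})) = p + 1" using ynot ci by simp
  then have cB: "p + 1 \<le> card B" using card_mono[OF fB sub] by simp
  have pl: "p < length ys" using pp len by simp
  have yp: "ys!p \<le> y"
  proof (rule ccontr)
    assume "\<not> ys!p \<le> y"
    then have gt: "ys!0 < ys!p" unfolding y_def by simp
    have "Q \<subseteq> {..<p}"
    proof
      fix i assume "i \<in> Q"
      then have "i < length ys" "ys!i \<le> ys!0" unfolding Q_def y_def by auto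
      then show "i \<in> {..<p}" using lay_a[OF Ly _ pl _ gt] by simp
    qed
    then have "card Q \<le> p" by (metis card_lessThan card_mono finite_lessThan)
    then show False using cQ cB by simp
  qed
  have "ys!p < ys!(p-1)"
  proof (cases "p - 1 = 0")
    case True
    have "ys!p \<noteq> ys!0" using nth_ne0[OF dy pl p0] .
    then show ?thesis using yp True unfolding y_def by simp
  next
    case False
    show ?thesis using lay_b[OF Ly _ _ pl, of "p-1"] False p0 yp unfolding y_def by simp
  qed
  then have "wd ys ! (p-1) = False" using nth_wd[of "p-1" ys] pl p0 by simp
  then show False using wx W by simp
qed

lemma Lay_tl: "Lay (x#xs) \<Longrightarrow> Lay xs"
  unfolding Lay_def using av3_Cons by auto

lemma MM_tl: "MM (x#xs) \<Longrightarrow> MM xs"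
  unfolding MM_def using av3_Cons by auto

lemma uniq_gen:
  assumes hd: "\<And>x xs y ys. R (x#xs) \<Longrightarrow> R (y#ys) \<Longrightarrow> set (x#xs) = set (y#ys) \<Longrightarrow> wd (x#xs) = wd (y#ys) \<Longrightarrow> x = y"
    and tl: "\<And>x xs. R (x#xs) \<Longrightarrow> R xs"
    and dist: "\<And>xs. R xs \<Longrightarrow> distinct xs"
  shows "R xs \<Longrightarrow> R ys \<Longrightarrow> set xs = set ys \<Longrightarrow> wd xs = wd ys \<Longrightarrow> xs = ys"
proof (induction xs arbitrary: ys)
  case Nil then show ?case by simp
next
  case (Cons x xs)
  then obtain y ys' where ys: "ys = y # ys'" by (cases ys) auto
  have xy: "x = y" using hd Cons.prems ys by blast
  have dx: "distinct (x#xs)" using dist Cons.prems(1) by blast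
  have dy: "distinct (y#ys')" using dist Cons.prems(2) ys by blast
  have s: "set xs = set ys'" using Cons.prems(3) dx dy xy ys by auto
  have w: "wd xs = wd ys'"
  proof (cases "xs = []")
    case True then show ?thesis using s by simp
  next
    case False
    then have "ys' \<noteq> []" using s by auto
    then show ?thesis using Cons.prems(4) False ys xy by (simp add: wd_Cons)
  qed
  show ?case using Cons.IH[of ys'] tl Cons.prems ys s w xy by blast
qed

lemma lay_uniq: "Lay xs \<Longrightarrow> Lay ys \<Longrightarrow> set xs = set ys \<Longrightarrow> wd xs = wd ys \<Longrightarrow> xs = ys"
proof (rule uniq_gen[where R=Lay])
  fix x xs y ys assume a: "Lay (x#xs)" "Lay (y#ys)" "set (x#xs) = set (y#ys)" "wd (x#xs) = wd (y#ys)"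
  show "x = y"
  proof (rule ccontr)
    assume "x \<noteq> y"
    then have "x < y \<or> y < x" by auto
    then show False
    proof
      assume "x < y" then show False using lay_ne[OF a(1) a(2) a(3) a(4)] by simp
    next
      assume "y < x" then show False using lay_ne[OF a(2) a(1) a(3)[symmetric] a(4)[symmetric]] by simp
    qed
  qed
next
  show "\<And>x xs. Lay (x#xs) \<Longrightarrow> Lay xs" by (rule Lay_tl)
next
  show "\<And>xs. Lay xs \<Longrightarrow> distinct xs" by (simp add: Lay_def)
qed

lemma mm_head:
  assumes M: "MM (x#xs)" and z: "z \<in> set xs"
  shows "(x < hd xs \<longrightarrow> x < z) \<and> (\<not> x < hd xs \<longrightarrow> z < x)"
proof -
  have ne: "xs \<noteq> []" using z by auto
  obtain k where k: "k < length xs" "xs!k = z" using z by (metis in_set_conv_nth)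
  have d: "distinct (x#xs)" using M unfolding MM_def by simp
  have zx: "z \<noteq> x" using d z by auto
  have h1: "(x#xs)!1 = hd xs" using ne by (simp add: hd_conv_nth)
  have hx: "hd xs \<noteq> x" using d ne by (metis distinct.simps(2) list.set_sel(1))
  show ?thesis
  proof (cases k)
    case 0
    then have "z = hd xs" using k ne by (simp add: hd_conv_nth)
    then show ?thesis using zx by auto
  next
    case (Suc k')
    have t: "0 < (1::nat)" "1 < Suc k" "Suc k < length (x#xs)" using k Suc by auto
    have n1: "\<not> P231 x (hd xs) z" using M[unfolded MM_def av3_def] t h1 k by (metis nth_Cons_0 nth_Cons_Suc)
    have n2: "\<not> P213 x (hd xs) z" using M[unfolded MM_def av3_def] t h1 k by (metis nth_Cons_0 nth_Cons_Suc)
    show ?thesis using n1 n2 zx hx unfolding P231_def P213_def by auto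
  qed
qed

lemma mm_uniq: "MM xs \<Longrightarrow> MM ys \<Longrightarrow> set xs = set ys \<Longrightarrow> wd xs = wd ys \<Longrightarrow> xs = ys"
proof (rule uniq_gen[where R=MM])
  fix x xs y ys assume a: "MM (x#xs)" "MM (y#ys)" "set (x#xs) = set (y#ys)" "wd (x#xs) = wd (y#ys)"
  show "x = y"
  proof (rule ccontr)
    assume xy: "x \<noteq> y"
    then have yx: "y \<in> set xs" and xy': "x \<in> set ys" using a(3) by auto
    have ne: "xs \<noteq> []" "ys \<noteq> []" using yx xy' by auto
    have w: "(x < hd xs) = (y < hd ys)" using a(4) ne by (simp add: wd_Cons)
    show False using mm_head[OF a(1) yx] mm_head[OF a(2) xy'] w by auto
  qed
next
  show "\<And>x xs. MM (x#xs) \<Longrightarrow> MM xs" by (rule MM_tl)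
next
  show "\<And>xs. MM xs \<Longrightarrow> distinct xs" by (simp add: MM_def)
qed



definition posT :: "bool list \<Rightarrow> nat set" where "posT w = {i. i < length w \<and> w!i}"
definition MX :: "nat set \<Rightarrow> nat" where "MX S = Max (card ` {I. I \<subseteq> S \<and> nonadjacent I})"

lemma asc_set_wd: "asc_set \<pi> = posT (wd \<pi>)"
proof (rule set_eqI)
  fix i
  have l: "i < length (wd \<pi>) \<longleftrightarrow> i + 1 < length \<pi>" by (simp add: length_wd less_diff_conv)
  show "i \<in> asc_set \<pi> \<longleftrightarrow> i \<in> posT (wd \<pi>)"
    unfolding asc_set_def posT_def mem_Collect_eq l using nth_wd[of i \<pi>] by blast
qed

lemma des_set_wd: assumes d: "distinct \<pi>" shows "des_set \<pi> = posT (map Not (wd \<pi>))"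
proof -
  have "\<pi>!i \<noteq> \<pi>!(i+1)" if "i + 1 < length \<pi>" for i
    using nth_eq_iff_index_eq[OF d, of i "i+1"] that by simp
  note ne = this
  show ?thesis
  proof (rule set_eqI)
    fix i
    have l: "i < length (map Not (wd \<pi>)) \<longleftrightarrow> i + 1 < length \<pi>" by (simp add: length_wd less_diff_conv)
    show "i \<in> des_set \<pi> \<longleftrightarrow> i \<in> posT (map Not (wd \<pi>))"
    proof (cases "i + 1 < length \<pi>")
      case True
      have "map Not (wd \<pi>) ! i = (\<not> \<pi>!i < \<pi>!(i+1))" using nth_wd[OF True] True by (simp add: length_wd)
      moreover have "(\<not> \<pi>!i < \<pi>!(i+1)) = (\<pi>!(i+1) < \<pi>!i)" using ne[OF True] by linarith
      ultimately show ?thesis unfolding des_set_def posT_def mem_Collect_eq l using True by simp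
    next
      case False
      then show ?thesis unfolding des_set_def posT_def mem_Collect_eq l by simp
    qed
  qed
qed

lemma perms_len: "\<pi> \<in> perms n \<Longrightarrow> length \<pi> = n"
proof -
  assume "\<pi> \<in> perms n"
  then have "distinct \<pi>" "set \<pi> = {1..n}" unfolding perms_def by auto
  then show ?thesis using distinct_card[of \<pi>] by simp
qed

lemma bijA: "bij_betw wd (Av2 n [2,3,1] [3,1,2]) {w. length w = n - 1}"
  unfolding bij_betw_def
proof
  show "inj_on wd (Av2 n [2,3,1] [3,1,2])"
  proof (rule inj_onI)
    fix x y assume a: "x \<in> Av2 n [2,3,1] [3,1,2]" "y \<in> Av2 n [2,3,1] [3,1,2]" "wd x = wd y"
    have "Lay x" "set x = {1..n}" using a(1) unfolding Av2_def perms_def Lay_def av231 av312 by auto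
    moreover have "Lay y" "set y = {1..n}" using a(2) unfolding Av2_def perms_def Lay_def av231 av312 by auto
    ultimately show "x = y" using lay_uniq a(3) by simp
  qed
  show "wd ` Av2 n [2,3,1] [3,1,2] = {w. length w = n - 1}"
  proof
    show "wd ` Av2 n [2,3,1] [3,1,2] \<subseteq> {w. length w = n - 1}"
      by (auto simp: length_wd Av2_def perms_len)
    show "{w. length w = n - 1} \<subseteq> wd ` Av2 n [2,3,1] [3,1,2]"
    proof
      fix w :: "bool list" assume "w \<in> {w. length w = n - 1}"
      then have lw: "length w = n - 1" by simp
      show "w \<in> wd ` Av2 n [2,3,1] [3,1,2]"
      proof (cases "n = 0")
        case True
        then have "w = []" using lw by simp
        moreover have "[] \<in> Av2 n [2,3,1] [3,1,2]" using True
          unfolding Av2_def perms_def av231 av312 by (simp add: av3_def)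
        ultimately show ?thesis by force
      next
        case False
        then have s: "{1..length w + 1} = {1..n}" using lw by simp
        have "lk w \<in> Av2 n [2,3,1] [3,1,2]" using lk_all[of w] s
          unfolding Av2_def perms_def av231 av312 by simp
        moreover have "wd (lk w) = w" using lk_all by simp
        ultimately show ?thesis by force
      qed
    qed
  qed
qed

lemma bijB: "bij_betw (\<lambda>\<sigma>. map Not (wd \<sigma>)) (Av2 n [2,1,3] [2,3,1]) {w. length w = n - 1}"
  unfolding bij_betw_def
proof
  show "inj_on (\<lambda>\<sigma>. map Not (wd \<sigma>)) (Av2 n [2,1,3] [2,3,1])"
  proof (rule inj_onI)
    fix x y assume a: "x \<in> Av2 n [2,1,3] [2,3,1]" "y \<in> Av2 n [2,1,3] [2,3,1]" "map Not (wd x) = map Not (wd y)"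
    have "wd x = wd y" using arg_cong[OF a(3), of "map Not"] by (simp add: comp_def)
    moreover have "MM x" "set x = {1..n}" using a(1) unfolding Av2_def perms_def MM_def av231 av213 by auto
    moreover have "MM y" "set y = {1..n}" using a(2) unfolding Av2_def perms_def MM_def av231 av213 by auto
    ultimately show "x = y" using mm_uniq by simp
  qed
  show "(\<lambda>\<sigma>. map Not (wd \<sigma>)) ` Av2 n [2,1,3] [2,3,1] = {w. length w = n - 1}"
  proof
    show "(\<lambda>\<sigma>. map Not (wd \<sigma>)) ` Av2 n [2,1,3] [2,3,1] \<subseteq> {w. length w = n - 1}"
      by (auto simp: length_wd Av2_def perms_len)
    show "{w. length w = n - 1} \<subseteq> (\<lambda>\<sigma>. map Not (wd \<sigma>)) ` Av2 n [2,1,3] [2,3,1]"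
    proof
      fix w :: "bool list" assume "w \<in> {w. length w = n - 1}"
      then have lw: "length w = n - 1" by simp
      show "w \<in> (\<lambda>\<sigma>. map Not (wd \<sigma>)) ` Av2 n [2,1,3] [2,3,1]"
      proof (cases "n = 0")
        case True
        then have "w = []" using lw by simp
        moreover have "[] \<in> Av2 n [2,1,3] [2,3,1]" using True
          unfolding Av2_def perms_def av231 av213 by (simp add: av3_def)
        ultimately show ?thesis by force
      next
        case False
        then have s: "{1..length (map Not w) + 1} = {1..n}" using lw by simp
        have "mk (map Not w) \<in> Av2 n [2,1,3] [2,3,1]" using mk_set[of "map Not w"] s mk_distinct mk_av
          unfolding Av2_def perms_def av231 av213 by simp
        moreover have "map Not (wd (mk (map Not w))) = w" using mk_wd by (simp add: comp_def)
        ultimately show ?thesis by force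
      qed
    qed
  qed
qed

theorem theorem15:
  fixes n :: nat and t1 t2 t3 t4 :: "'a :: comm_semiring_1"
  shows "(\<Sum>\<pi>\<in>Av2 n [2,3,1] [3,1,2]. t1 ^ asc \<pi> * t2 ^ des \<pi> * t3 ^ MNA \<pi> * t4 ^ MND \<pi>)
       = (\<Sum>\<sigma>\<in>Av2 n [2,1,3] [2,3,1]. t1 ^ des \<sigma> * t2 ^ asc \<sigma> * t3 ^ MND \<sigma> * t4 ^ MNA \<sigma>)"
proof -
  define G where "G = (\<lambda>w. t1 ^ card (posT w) * t2 ^ card (posT (map Not w)) * t3 ^ MX (posT w) * t4 ^ MX (posT (map Not w)))"
  have "(\<Sum>\<pi>\<in>Av2 n [2,3,1] [3,1,2]. t1 ^ asc \<pi> * t2 ^ des \<pi> * t3 ^ MNA \<pi> * t4 ^ MND \<pi>)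
      = (\<Sum>\<pi>\<in>Av2 n [2,3,1] [3,1,2]. G (wd \<pi>))"
  proof (rule sum.cong[OF refl])
    fix \<pi> assume "\<pi> \<in> Av2 n [2,3,1] [3,1,2]"
    then have d: "distinct \<pi>" by (simp add: Av2_def perms_def)
    show "t1 ^ asc \<pi> * t2 ^ des \<pi> * t3 ^ MNA \<pi> * t4 ^ MND \<pi> = G (wd \<pi>)"
      unfolding G_def asc_def des_def MNA_def MND_def MX_def asc_set_wd des_set_wd[OF d] ..
  qed
  also have "\<dots> = sum G {w. length w = n - 1}" by (rule sum.reindex_bij_betw[OF bijA])
  also have "\<dots> = (\<Sum>\<sigma>\<in>Av2 n [2,1,3] [2,3,1]. G (map Not (wd \<sigma>)))" by (rule sum.reindex_bij_betw[OF bijB, symmetric])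
  also have "\<dots> = (\<Sum>\<sigma>\<in>Av2 n [2,1,3] [2,3,1]. t1 ^ des \<sigma> * t2 ^ asc \<sigma> * t3 ^ MND \<sigma> * t4 ^ MNA \<sigma>)"
  proof (rule sum.cong[OF refl])
    fix \<sigma> assume "\<sigma> \<in> Av2 n [2,1,3] [2,3,1]"
    then have d: "distinct \<sigma>" by (simp add: Av2_def perms_def)
    have mm: "map Not (map Not (wd \<sigma>)) = wd \<sigma>" by (simp add: comp_def)
    show "G (map Not (wd \<sigma>)) = t1 ^ des \<sigma> * t2 ^ asc \<sigma> * t3 ^ MND \<sigma> * t4 ^ MNA \<sigma>"
      unfolding G_def asc_def des_def MNA_def MND_def MX_def asc_set_wd des_set_wd[OF d] mm ..
  qed
  finally show ?thesis .
qed

end
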